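(* Let $G=(X,E)$ be a finite connected graph with $n=|X|$, $W:X\to\mathbb{R}$, and let $w_1\ge w_2\ge\dots\ge w_n$ be the values of $W$ listed with multiplicity in decreasing order. For each real $Q$ let $\lambda_1\le\dots\le\lambda_n$ be the eigenvalues of $H=\Delta-QW$ and $\psi_1,\dots,\psi_n$ a corresponding orthonormal basis of eigenvectors (any choice). Then for every $i$ and every vertex $v$ with $W(v)\neq w_i$, $\psi_i(v)\to0$ as $Q\to\infty$.
   Context: $\Delta$ is the symmetrized Laplacian: $\Delta(v,v)=1$, $\Delta(v,w)=-1/\sqrt{d_vd_w}$ if $vw\in E$ ($d_v$ the degree), $0$ otherwise; $W$ is identified with the diagonal matrix $\mathrm{diag}(W(v))$. *)

theory Defs
  imports "HOL-Analysis.Analysis"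
begin

definition simple_graph :: "'a set \<Rightarrow> ('a \<Rightarrow> 'a \<Rightarrow> bool) \<Rightarrow> bool" where
  "simple_graph X E \<longleftrightarrow> finite X \<and> (\<forall>u v. E u v \<longrightarrow> u \<in> X \<and> v \<in> X)
     \<and> (\<forall>u v. E u v \<longrightarrow> E v u) \<and> (\<forall>u. \<not> E u u)"

definition graph_connected :: "'a set \<Rightarrow> ('a \<Rightarrow> 'a \<Rightarrow> bool) \<Rightarrow> bool" where
  "graph_connected X E \<longleftrightarrow> X \<noteq> {} \<and> (\<forall>u\<in>X. \<forall>v\<in>X. E\<^sup>*\<^sup>* u v)"

definition degree :: "'a set \<Rightarrow> ('a \<Rightarrow> 'a \<Rightarrow> bool) \<Rightarrow> 'a \<Rightarrow> nat" where
  "degree X E v = card {u \<in> X. E v u}"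

definition sym_laplacian :: "'a set \<Rightarrow> ('a \<Rightarrow> 'a \<Rightarrow> bool) \<Rightarrow> 'a \<Rightarrow> 'a \<Rightarrow> real" where
  "sym_laplacian X E v w =
     (if v = w then 1
      else if E v w then - 1 / sqrt (real (degree X E v) * real (degree X E w))
      else 0)"

definition schrodinger_apply ::
  "'a set \<Rightarrow> ('a \<Rightarrow> 'a \<Rightarrow> bool) \<Rightarrow> ('a \<Rightarrow> real) \<Rightarrow> real \<Rightarrow> ('a \<Rightarrow> real) \<Rightarrow> 'a \<Rightarrow> real" where
  "schrodinger_apply X E W Q f v =
     (\<Sum>u\<in>X. sym_laplacian X E v u * f u) - Q * W v * f v"

text \<open>w 0 \<ge> w 1 \<ge> ... \<ge> w (n-1) are the values of W on X listed with multiplicity.\<close>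
definition decreasing_listing :: "'a set \<Rightarrow> ('a \<Rightarrow> real) \<Rightarrow> (nat \<Rightarrow> real) \<Rightarrow> bool" where
  "decreasing_listing X W w \<longleftrightarrow>
     (\<exists>\<sigma>. bij_betw \<sigma> {..<card X} X \<and> (\<forall>i<card X. w i = W (\<sigma> i)))
     \<and> (\<forall>i j. i \<le> j \<and> j < card X \<longrightarrow> w j \<le> w i)"

end

theory Submission
  imports Defs
begin

lemma exists_nontriv:
  fixes T :: "'b set" and a :: "nat \<Rightarrow> 'b \<Rightarrow> real"
  assumes "finite T" "m < card T"
  shows "\<exists>f. (\<forall>x. x \<notin> T \<longrightarrow> f x = 0) \<and> (\<exists>x\<in>T. f x \<noteq> 0) \<and> (\<forall>k<m. (\<Sum>t\<in>T. a k t * f t) = 0)"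
  using assms
proof (induction m arbitrary: T a)
  case 0
  then obtain x where x: "x \<in> T" by fastforce
  show ?case
    by (rule exI[of _ "\<lambda>y. if y = x then 1 else 0"]) (use x in auto)
next
  case (Suc m)
  show ?case
  proof (cases "\<forall>t\<in>T. a m t = 0")
    case True
    obtain f where f: "\<forall>x. x \<notin> T \<longrightarrow> f x = 0" "\<exists>x\<in>T. f x \<noteq> 0" "\<forall>k<m. (\<Sum>t\<in>T. a k t * f t) = 0"
      using Suc.IH[of T a] Suc.prems by auto
    show ?thesis
    proof (intro exI[of _ f] conjI f(1) f(2) allI impI)
      fix k assume "k < Suc m"
      then consider "k < m" | "k = m" by linarith
      then show "(\<Sum>t\<in>T. a k t * f t) = 0"
        by cases (use f(3) True in auto)
    qed
  next
    case False
    then obtain t0 where t0: "t0 \<in> T" "a m t0 \<noteq> 0" by blast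
    define T' where "T' = T - {t0}"
    have fT': "finite T'" using Suc.prems T'_def by auto
    have cT': "m < card T'" using Suc.prems t0 T'_def by auto
    define a' where "a' = (\<lambda>k t. a k t - a k t0 * a m t / a m t0)"
    obtain g where g: "\<forall>x. x \<notin> T' \<longrightarrow> g x = 0" "\<exists>x\<in>T'. g x \<noteq> 0" "\<forall>k<m. (\<Sum>t\<in>T'. a' k t * g t) = 0"
      using Suc.IH[OF fT' cT', of a'] by auto
    define S where "S = (\<Sum>t\<in>T'. a m t * g t)"
    define f where "f = g(t0 := - S / a m t0)"
    have sumT: "(\<Sum>t\<in>T. a k t * f t) = a k t0 * f t0 + (\<Sum>t\<in>T'. a k t * g t)" for k
    proof -
      have "(\<Sum>t\<in>T. a k t * f t) = a k t0 * f t0 + (\<Sum>t\<in>T'. a k t * f t)"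
        using Suc.prems(1) t0(1) T'_def by (simp add: sum.remove)
      moreover have "(\<Sum>t\<in>T'. a k t * f t) = (\<Sum>t\<in>T'. a k t * g t)"
        by (rule sum.cong) (auto simp: f_def T'_def)
      ultimately show ?thesis by simp
    qed
    show ?thesis
    proof (intro exI[of _ f] conjI allI impI)
      fix x assume "x \<notin> T" then show "f x = 0" using g(1) t0 T'_def f_def by auto
    next
      obtain x where "x \<in> T'" "g x \<noteq> 0" using g(2) by blast
      then show "\<exists>x\<in>T. f x \<noteq> 0" using T'_def f_def by (intro bexI[of _ x]) auto
    next
      fix k assume k: "k < Suc m"
      then consider "k < m" | "k = m" by linarith
      then show "(\<Sum>t\<in>T. a k t * f t) = 0"
      proof cases
        case 1
        have "(\<Sum>t\<in>T'. a' k t * g t) = (\<Sum>t\<in>T'. a k t * g t) - a k t0 / a m t0 * S"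
          unfolding a'_def S_def by (simp add: sum_subtractf sum_distrib_left algebra_simps)
        then show ?thesis using g(3) 1 sumT[of k] t0(2) by (simp add: f_def)
      next
        case 2
        then show ?thesis using sumT[of k] t0(2) by (simp add: f_def S_def)
      qed
    qed
  qed
qed


lemma sum_swap_mult:
  fixes b :: "'a \<Rightarrow> real" and c :: "'b \<Rightarrow> real"
  shows "(\<Sum>v\<in>X. b v * (\<Sum>j\<in>J. c j * a j v)) = (\<Sum>j\<in>J. c j * (\<Sum>v\<in>X. b v * a j v))"
proof -
  have "(\<Sum>v\<in>X. b v * (\<Sum>j\<in>J. c j * a j v)) = (\<Sum>v\<in>X. \<Sum>j\<in>J. c j * (b v * a j v))"
    by (simp only: sum_distrib_left mult.left_commute)
  also have "\<dots> = (\<Sum>j\<in>J. \<Sum>v\<in>X. c j * (b v * a j v))" by (rule sum.swap)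
  also have "\<dots> = (\<Sum>j\<in>J. c j * (\<Sum>v\<in>X. b v * a j v))" by (simp add: sum_distrib_left)
  finally show ?thesis .
qed

lemma orth_zero:
  fixes X :: "'a set" and u :: "nat \<Rightarrow> 'a \<Rightarrow> real" and g :: "'a \<Rightarrow> real"
  assumes fin: "finite X"
    and orth: "\<And>i j. i < card X \<Longrightarrow> j < card X \<Longrightarrow> (\<Sum>v\<in>X. u i v * u j v) = (if i = j then 1 else 0)"
    and g: "\<And>k. k < card X \<Longrightarrow> (\<Sum>v\<in>X. g v * u k v) = 0" and v0: "v0 \<in> X"
  shows "g v0 = 0"
proof (rule ccontr)
  assume g0: "g v0 \<noteq> 0"
  define n where "n = card X"
  define U where "U = (\<lambda>t. if t < n then u t else g)"
  obtain \<sigma> where \<sigma>: "bij_betw \<sigma> {..<n} X"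
    using fin n_def by (metis bij_betw_from_nat_into_finite)
  have gpos: "(\<Sum>v\<in>X. g v * g v) > 0"
  proof -
    have "(\<Sum>v\<in>X. g v * g v) \<ge> g v0 * g v0"
      using fin v0 by (intro member_le_sum) auto
    moreover have "g v0 * g v0 > 0" using g0 not_real_square_gt_zero by blast
    ultimately show ?thesis by linarith
  qed
  have ip: "(\<Sum>x\<in>X. U s x * U t x) = (if s = t then (\<Sum>x\<in>X. U s x * U s x) else 0)"
    if "s \<le> n" "t \<le> n" for s t
  proof -
    have sn: "s < n \<or> s = n" and tn: "t < n \<or> t = n" using that by auto
    consider "s < n" "t < n" | "s < n" "t = n" | "s = n" "t < n" | "s = n" "t = n"
      using sn tn by blast
    then show ?thesis
    proof cases
      case 1 then show ?thesis using orth[of s t] orth[of s s] by (cases "s = t") (simp_all add: U_def n_def)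
    next
      case 2 then show ?thesis using g[of s] by (simp add: U_def n_def mult.commute)
    next
      case 3 then show ?thesis using g[of t] by (simp add: U_def n_def)
    qed simp
  qed
  have Upos: "(\<Sum>x\<in>X. U s x * U s x) > 0" if "s \<le> n" for s
  proof (cases "s < n")
    case True then show ?thesis using orth[of s s] by (simp add: U_def n_def)
  next
    case False then show ?thesis using gpos by (simp add: U_def)
  qed
  obtain c where c: "\<forall>x. x \<notin> {..n} \<longrightarrow> c x = 0" "\<exists>x\<in>{..n}. c x \<noteq> 0"
     "\<forall>k<n. (\<Sum>t\<in>{..n}. U t (\<sigma> k) * c t) = 0"
    using exists_nontriv[of "{..n}" n "\<lambda>k t. U t (\<sigma> k)"] by auto
  have cx: "(\<Sum>t\<in>{..n}. c t * U t x) = 0" if "x \<in> X" for x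
  proof -
    have "x \<in> \<sigma> ` {..<n}" using \<sigma> that by (simp add: bij_betw_def)
    then obtain k where "k < n" "x = \<sigma> k" by auto
    then show ?thesis using c(3) by (simp add: mult.commute)
  qed
  obtain s where s: "s \<le> n" "c s \<noteq> 0" using c(2) by auto
  have "0 = (\<Sum>x\<in>X. U s x * (\<Sum>t\<in>{..n}. c t * U t x))" using cx by simp
  also have "\<dots> = (\<Sum>t\<in>{..n}. c t * (\<Sum>x\<in>X. U s x * U t x))"
    by (rule sum_swap_mult)
  also have "\<dots> = (\<Sum>t\<in>{..n}. if t = s then c s * (\<Sum>x\<in>X. U s x * U s x) else 0)"
  proof (rule sum.cong[OF refl])
    fix t assume t: "t \<in> {..n}"
    show "c t * (\<Sum>x\<in>X. U s x * U t x) = (if t = s then c s * (\<Sum>x\<in>X. U s x * U s x) else 0)"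
    proof (cases "t = s")
      case False then show ?thesis using ip[OF s(1), of t] t by simp
    qed simp
  qed
  also have "\<dots> = c s * (\<Sum>x\<in>X. U s x * U s x)" using s by simp
  finally show False using Upos[OF s(1)] s(2) by simp
qed


lemma quad_bound:
  fixes M :: "'a \<Rightarrow> 'a \<Rightarrow> real"
  assumes fin: "finite X"
  shows "\<bar>\<Sum>a\<in>X. f a * (\<Sum>b\<in>X. M a b * f b)\<bar> \<le> (\<Sum>a\<in>X. \<Sum>b\<in>X. \<bar>M a b\<bar>) * (\<Sum>a\<in>X. f a * f a)"
proof -
  define S where "S = (\<Sum>a\<in>X. f a * f a)"
  have sq: "f a * f a \<le> S" if "a \<in> X" for a
    unfolding S_def using fin that by (intro member_le_sum) auto
  have pr: "\<bar>f a * f b\<bar> \<le> S" if "a \<in> X" "b \<in> X" for a b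
  proof -
    have "0 \<le> (\<bar>f a\<bar> - \<bar>f b\<bar>) * (\<bar>f a\<bar> - \<bar>f b\<bar>)" by simp
    then have "2 * (\<bar>f a\<bar> * \<bar>f b\<bar>) \<le> \<bar>f a\<bar> * \<bar>f a\<bar> + \<bar>f b\<bar> * \<bar>f b\<bar>"
      by (simp add: algebra_simps)
    then have "2 * \<bar>f a * f b\<bar> \<le> f a * f a + f b * f b"
      by (simp only: abs_mult abs_mult_self_eq)
    then show ?thesis using sq[OF that(1)] sq[OF that(2)] by linarith
  qed
  have "\<bar>\<Sum>a\<in>X. f a * (\<Sum>b\<in>X. M a b * f b)\<bar> \<le> (\<Sum>a\<in>X. \<bar>f a * (\<Sum>b\<in>X. M a b * f b)\<bar>)"
    by (rule sum_abs)
  also have "\<dots> \<le> (\<Sum>a\<in>X. \<Sum>b\<in>X. \<bar>M a b\<bar> * S)"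
  proof (rule sum_mono)
    fix a assume a: "a \<in> X"
    have "f a * (\<Sum>b\<in>X. M a b * f b) = (\<Sum>b\<in>X. M a b * (f a * f b))"
      by (simp add: sum_distrib_left mult.left_commute)
    then have "\<bar>f a * (\<Sum>b\<in>X. M a b * f b)\<bar> = \<bar>\<Sum>b\<in>X. M a b * (f a * f b)\<bar>" by simp
    also have "\<dots> \<le> (\<Sum>b\<in>X. \<bar>M a b * (f a * f b)\<bar>)" by (rule sum_abs)
    also have "\<dots> \<le> (\<Sum>b\<in>X. \<bar>M a b\<bar> * S)"
    proof (rule sum_mono)
      fix b assume b: "b \<in> X"
      show "\<bar>M a b * (f a * f b)\<bar> \<le> \<bar>M a b\<bar> * S"
        unfolding abs_mult[of "M a b"] by (rule mult_left_mono[OF pr[OF a b] abs_ge_zero])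
    qed
    finally show "\<bar>f a * (\<Sum>b\<in>X. M a b * f b)\<bar> \<le> (\<Sum>b\<in>X. \<bar>M a b\<bar> * S)" .
  qed
  also have "\<dots> = (\<Sum>a\<in>X. \<Sum>b\<in>X. \<bar>M a b\<bar>) * S"
    by (simp add: sum_distrib_right)
  finally show ?thesis unfolding S_def .
qed

lemma row_bound:
  fixes M :: "'a \<Rightarrow> 'a \<Rightarrow> real"
  assumes fin: "finite X" and a: "a \<in> X" and g: "\<And>b. b \<in> X \<Longrightarrow> \<bar>g b\<bar> \<le> 1"
  shows "\<bar>\<Sum>b\<in>X. M a b * g b\<bar> \<le> (\<Sum>a\<in>X. \<Sum>b\<in>X. \<bar>M a b\<bar>)"
proof -
  have "\<bar>\<Sum>b\<in>X. M a b * g b\<bar> \<le> (\<Sum>b\<in>X. \<bar>M a b * g b\<bar>)" by (rule sum_abs)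
  also have "\<dots> \<le> (\<Sum>b\<in>X. \<bar>M a b\<bar>)"
  proof (rule sum_mono)
    fix b assume b: "b \<in> X"
    show "\<bar>M a b * g b\<bar> \<le> \<bar>M a b\<bar>"
      unfolding abs_mult using mult_left_mono[OF g[OF b] abs_ge_zero[of "M a b"]] by simp
  qed
  also have "\<dots> \<le> (\<Sum>a\<in>X. \<Sum>b\<in>X. \<bar>M a b\<bar>)"
    using fin a by (intro member_le_sum) (auto intro: sum_nonneg)
  finally show ?thesis .
qed

lemma rayleigh:
  fixes u :: "nat \<Rightarrow> 'a \<Rightarrow> real" and l :: "nat \<Rightarrow> real"
  assumes fin: "finite X"
    and orth: "\<And>i j. i < card X \<Longrightarrow> j < card X \<Longrightarrow> (\<Sum>v\<in>X. u i v * u j v) = (if i = j then 1 else 0)"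
    and eig: "\<And>i v. i < card X \<Longrightarrow> v \<in> X \<Longrightarrow> schrodinger_apply X E W Q (u i) v = l i * u i v"
  shows "(\<Sum>x\<in>X. f x * schrodinger_apply X E W Q f x) = (\<Sum>j<card X. l j * (\<Sum>x\<in>X. f x * u j x)^2)"
    and "(\<Sum>x\<in>X. f x * f x) = (\<Sum>j<card X. (\<Sum>x\<in>X. f x * u j x)^2)"
proof -
  define n where "n = card X"
  define c where "c = (\<lambda>j. \<Sum>x\<in>X. f x * u j x)"
  define g where "g = (\<lambda>x. f x - (\<Sum>j<n. c j * u j x))"
  have gk: "(\<Sum>v\<in>X. g v * u k v) = 0" if "k < card X" for k
  proof -
    have "(\<Sum>v\<in>X. g v * u k v) = (\<Sum>v\<in>X. f v * u k v) - (\<Sum>v\<in>X. u k v * (\<Sum>j<n. c j * u j v))"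
      unfolding g_def by (simp add: right_diff_distrib sum_subtractf mult.commute)
    also have "(\<Sum>v\<in>X. u k v * (\<Sum>j<n. c j * u j v)) = (\<Sum>j<n. c j * (\<Sum>v\<in>X. u k v * u j v))"
      by (rule sum_swap_mult)
    also have "\<dots> = (\<Sum>j<n. if j = k then c k else 0)"
      by (rule sum.cong) (use orth that n_def in auto)
    also have "\<dots> = c k" using that n_def by simp
    finally show ?thesis by (simp add: c_def)
  qed
  have exp: "f x = (\<Sum>j<n. c j * u j x)" if "x \<in> X" for x
    using orth_zero[OF fin orth gk that] unfolding g_def by simp
  have Hf: "schrodinger_apply X E W Q f x = (\<Sum>j<n. (c j * l j) * u j x)" if x: "x \<in> X" for x
  proof -
    have "schrodinger_apply X E W Q f x =
        (\<Sum>b\<in>X. sym_laplacian X E x b * (\<Sum>j<n. c j * u j b)) - Q * W x * (\<Sum>j<n. c j * u j x)"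
      unfolding schrodinger_apply_def using exp x by simp
    also have "(\<Sum>b\<in>X. sym_laplacian X E x b * (\<Sum>j<n. c j * u j b)) =
        (\<Sum>j<n. c j * (\<Sum>b\<in>X. sym_laplacian X E x b * u j b))"
      by (rule sum_swap_mult)
    also have "Q * W x * (\<Sum>j<n. c j * u j x) = (\<Sum>j<n. c j * (Q * W x * u j x))"
      by (simp add: sum_distrib_left mult.left_commute)
    also have "(\<Sum>j<n. c j * (\<Sum>b\<in>X. sym_laplacian X E x b * u j b)) - (\<Sum>j<n. c j * (Q * W x * u j x))
        = (\<Sum>j<n. c j * schrodinger_apply X E W Q (u j) x)"
      unfolding schrodinger_apply_def by (simp add: sum_subtractf right_diff_distrib)
    also have "\<dots> = (\<Sum>j<n. (c j * l j) * u j x)"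
      by (rule sum.cong) (use eig x n_def in auto)
    finally show ?thesis .
  qed
  have "(\<Sum>x\<in>X. f x * schrodinger_apply X E W Q f x) = (\<Sum>x\<in>X. f x * (\<Sum>j<n. (c j * l j) * u j x))"
    using Hf by simp
  also have "\<dots> = (\<Sum>j<n. (c j * l j) * (\<Sum>x\<in>X. f x * u j x))"
    by (rule sum_swap_mult)
  also have "\<dots> = (\<Sum>j<card X. l j * (\<Sum>x\<in>X. f x * u j x)^2)"
    unfolding n_def by (rule sum.cong) (simp_all add: c_def power2_eq_square)
  finally show "(\<Sum>x\<in>X. f x * schrodinger_apply X E W Q f x) = (\<Sum>j<card X. l j * (\<Sum>x\<in>X. f x * u j x)^2)" .
  have "(\<Sum>x\<in>X. f x * f x) = (\<Sum>x\<in>X. f x * (\<Sum>j<n. c j * u j x))"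
    using exp by simp
  also have "\<dots> = (\<Sum>j<n. c j * (\<Sum>x\<in>X. f x * u j x))"
    by (rule sum_swap_mult)
  also have "\<dots> = (\<Sum>j<card X. (\<Sum>x\<in>X. f x * u j x)^2)"
    unfolding n_def by (rule sum.cong) (simp_all add: c_def power2_eq_square)
  finally show "(\<Sum>x\<in>X. f x * f x) = (\<Sum>j<card X. (\<Sum>x\<in>X. f x * u j x)^2)" .
qed


theorem lemma1:
  fixes X :: "'a set" and E :: "'a \<Rightarrow> 'a \<Rightarrow> bool" and W :: "'a \<Rightarrow> real"
    and w :: "nat \<Rightarrow> real"
    and lam :: "real \<Rightarrow> nat \<Rightarrow> real"
    and psi :: "real \<Rightarrow> nat \<Rightarrow> 'a \<Rightarrow> real"
  assumes graph: "simple_graph X E"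
    and conn: "graph_connected X E"
    and wlist: "decreasing_listing X W w"
    and sorted: "\<And>Q i j. i \<le> j \<Longrightarrow> j < card X \<Longrightarrow> lam Q i \<le> lam Q j"
    and orthonormal: "\<And>Q i j. i < card X \<Longrightarrow> j < card X \<Longrightarrow>
         (\<Sum>v\<in>X. psi Q i v * psi Q j v) = (if i = j then 1 else 0)"
    and eigen: "\<And>Q i v. i < card X \<Longrightarrow> v \<in> X \<Longrightarrow>
         schrodinger_apply X E W Q (psi Q i) v = lam Q i * psi Q i v"
  shows "\<forall>i < card X. \<forall>v \<in> X. W v \<noteq> w i \<longrightarrow> ((\<lambda>Q. psi Q i v) \<longlongrightarrow> 0) at_top"
proof (intro allI impI ballI)
  fix i v assume i: "i < card X" and v: "v \<in> X" and Wv: "W v \<noteq> w i"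
  define n where "n = card X"
  have fin: "finite X" using graph simple_graph_def by auto
  obtain \<sigma> where \<sigma>: "bij_betw \<sigma> {..<n} X" and \<sigma>w: "\<forall>k<n. w k = W (\<sigma> k)"
    and wdec: "\<forall>i j. i \<le> j \<and> j < n \<longrightarrow> w j \<le> w i"
    using wlist unfolding decreasing_listing_def n_def by blast
  have inj\<sigma>: "inj_on \<sigma> {..<n}" using \<sigma> bij_betw_def by blast
  have \<sigma>X: "\<sigma> k \<in> X" if "k < n" for k using \<sigma> that bij_betwE by blast
  define M where "M = sym_laplacian X E"
  define C where "C = 1 + (\<Sum>a\<in>X. \<Sum>b\<in>X. \<bar>M a b\<bar>)"
  have C0: "(\<Sum>a\<in>X. \<Sum>b\<in>X. \<bar>M a b\<bar>) \<ge> 0" by (intro sum_nonneg) auto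
  have Cpos: "C > 0" using C0 C_def by linarith
  have qb: "\<bar>\<Sum>a\<in>X. f a * (\<Sum>b\<in>X. M a b * f b)\<bar> \<le> C * (\<Sum>a\<in>X. f a * f a)" for f
  proof -
    have "(\<Sum>a\<in>X. f a * f a) \<ge> 0" by (intro sum_nonneg) auto
    then have "(\<Sum>a\<in>X. \<Sum>b\<in>X. \<bar>M a b\<bar>) * (\<Sum>a\<in>X. f a * f a) \<le> C * (\<Sum>a\<in>X. f a * f a)"
      unfolding C_def by (intro mult_right_mono) auto
    then show ?thesis using quad_bound[OF fin, of f M] by linarith
  qed
  have formH: "(\<Sum>x\<in>X. f x * schrodinger_apply X E W Q f x) =
      (\<Sum>a\<in>X. f a * (\<Sum>b\<in>X. M a b * f b)) - Q * (\<Sum>x\<in>X. W x * (f x * f x))" for f Q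
  proof -
    have "(\<Sum>x\<in>X. f x * schrodinger_apply X E W Q f x) =
        (\<Sum>x\<in>X. f x * (\<Sum>b\<in>X. M x b * f b) - Q * (W x * (f x * f x)))"
      unfolding schrodinger_apply_def M_def by (rule sum.cong[OF refl]) (simp add: algebra_simps)
    also have "\<dots> = (\<Sum>a\<in>X. f a * (\<Sum>b\<in>X. M a b * f b)) - Q * (\<Sum>x\<in>X. W x * (f x * f x))"
      by (simp add: sum_subtractf sum_distrib_left)
    finally show ?thesis .
  qed
  have ray1: "(\<Sum>x\<in>X. f x * schrodinger_apply X E W Q f x) = (\<Sum>j<card X. lam Q j * (\<Sum>x\<in>X. f x * psi Q j x)^2)" for Q f
    by (rule rayleigh(1)[OF fin orthonormal[where Q=Q] eigen[where Q=Q]])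
  have ray2: "(\<Sum>x\<in>X. f x * f x) = (\<Sum>j<card X. (\<Sum>x\<in>X. f x * psi Q j x)^2)" for Q f
    by (rule rayleigh(2)[OF fin orthonormal[where Q=Q] eigen[where Q=Q]])
  have upper: "lam Q i \<le> C - Q * w i" if Q: "Q \<ge> 0" for Q
  proof -
    define T where "T = \<sigma> ` {..i}"
    have TX: "T \<subseteq> X" using \<sigma>X i n_def by (auto simp: T_def)
    have finT: "finite T" using TX fin finite_subset by blast
    have "inj_on \<sigma> {..i}" using inj\<sigma> i n_def by (auto intro: inj_on_subset)
    then have cT: "card T = Suc i" by (simp add: T_def card_image)
    obtain f where f0: "\<forall>x. x \<notin> T \<longrightarrow> f x = 0" and fnz: "\<exists>x\<in>T. f x \<noteq> 0"
      and forth: "\<forall>k<i. (\<Sum>t\<in>T. psi Q k t * f t) = 0"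
      using exists_nontriv[OF finT, of i "psi Q"] cT by auto
    have XT: "(\<Sum>x\<in>X. h x * f x) = (\<Sum>x\<in>T. h x * f x)" for h
      by (rule sum.mono_neutral_right[OF fin TX]) (use f0 in auto)
    have cj: "(\<Sum>x\<in>X. f x * psi Q j x) = 0" if "j < i" for j
      using XT[of "psi Q j"] forth that by (simp add: mult.commute)
    define N where "N = (\<Sum>x\<in>X. f x * f x)"
    obtain x0 where x0: "x0 \<in> T" "f x0 \<noteq> 0" using fnz by blast
    have Npos: "N > 0"
    proof -
      have "N \<ge> f x0 * f x0" unfolding N_def using fin x0 TX by (intro member_le_sum) auto
      moreover have "f x0 * f x0 > 0" using x0(2) not_real_square_gt_zero by blast
      ultimately show ?thesis by linarith
    qed
    have "lam Q i * N = (\<Sum>j<card X. lam Q i * (\<Sum>x\<in>X. f x * psi Q j x)^2)"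
      unfolding N_def ray2[of f Q] by (simp add: sum_distrib_left)
    also have "\<dots> \<le> (\<Sum>j<card X. lam Q j * (\<Sum>x\<in>X. f x * psi Q j x)^2)"
    proof (rule sum_mono)
      fix j assume j: "j \<in> {..<card X}"
      show "lam Q i * (\<Sum>x\<in>X. f x * psi Q j x)^2 \<le> lam Q j * (\<Sum>x\<in>X. f x * psi Q j x)^2"
      proof (cases "j < i")
        case True then show ?thesis using cj by simp
      next
        case False then show ?thesis using sorted[of i j Q] j by (intro mult_right_mono) auto
      qed
    qed
    also have "\<dots> = (\<Sum>x\<in>X. f x * schrodinger_apply X E W Q f x)" using ray1[of f Q] by simp
    also have "\<dots> = (\<Sum>a\<in>X. f a * (\<Sum>b\<in>X. M a b * f b)) - Q * (\<Sum>x\<in>X. W x * (f x * f x))"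
      by (rule formH)
    also have "\<dots> \<le> C * N - Q * (w i * N)"
    proof -
      have "(\<Sum>a\<in>X. f a * (\<Sum>b\<in>X. M a b * f b)) \<le> C * N" using abs_le_D1[OF qb[of f]] by (simp add: N_def)
      moreover have "w i * N \<le> (\<Sum>x\<in>X. W x * (f x * f x))"
        unfolding N_def sum_distrib_left
      proof (rule sum_mono)
        fix x assume x: "x \<in> X"
        show "w i * (f x * f x) \<le> W x * (f x * f x)"
        proof (cases "x \<in> T")
          case True
          then obtain k where k: "k \<le> i" "x = \<sigma> k" by (auto simp: T_def)
          then have "w i \<le> W x" using \<sigma>w wdec i n_def by auto
          then show ?thesis by (intro mult_right_mono) auto
        next
          case False then show ?thesis using f0 by simp
        qed
      qed
      then have "Q * (w i * N) \<le> Q * (\<Sum>x\<in>X. W x * (f x * f x))" using Q by (rule mult_left_mono)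
      ultimately show ?thesis by linarith
    qed
    also have "\<dots> = (C - Q * w i) * N" by (simp add: algebra_simps)
    finally show ?thesis using Npos by simp
  qed
  have lower: "lam Q i \<ge> - C - Q * w i" if Q: "Q \<ge> 0" for Q
  proof -
    define T where "T = \<sigma> ` {i..<n}"
    have TX: "T \<subseteq> X" using \<sigma>X by (auto simp: T_def)
    have finT: "finite T" using TX fin finite_subset by blast
    have "inj_on \<sigma> {i..<n}" using inj\<sigma> by (auto intro: inj_on_subset)
    then have cT: "card T = n - i" by (simp add: T_def card_image)
    have mT: "n - Suc i < card T" using cT i n_def by simp
    obtain f where f0: "\<forall>x. x \<notin> T \<longrightarrow> f x = 0" and fnz: "\<exists>x\<in>T. f x \<noteq> 0"
      and forth: "\<forall>k<n - Suc i. (\<Sum>t\<in>T. psi Q (Suc i + k) t * f t) = 0"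
      using exists_nontriv[OF finT mT, of "\<lambda>k. psi Q (Suc i + k)"] by auto
    have XT: "(\<Sum>x\<in>X. h x * f x) = (\<Sum>x\<in>T. h x * f x)" for h
      by (rule sum.mono_neutral_right[OF fin TX]) (use f0 in auto)
    have cj: "(\<Sum>x\<in>X. f x * psi Q j x) = 0" if "i < j" "j < n" for j
    proof -
      have "j = Suc i + (j - Suc i)" "j - Suc i < n - Suc i" using that by auto
      then have "(\<Sum>t\<in>T. psi Q j t * f t) = 0" using forth by metis
      then show ?thesis using XT[of "psi Q j"] by (simp add: mult.commute)
    qed
    define N where "N = (\<Sum>x\<in>X. f x * f x)"
    obtain x0 where x0: "x0 \<in> T" "f x0 \<noteq> 0" using fnz by blast
    have Npos: "N > 0"
    proof -
      have "N \<ge> f x0 * f x0" unfolding N_def using fin x0 TX by (intro member_le_sum) auto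
      moreover have "f x0 * f x0 > 0" using x0(2) not_real_square_gt_zero by blast
      ultimately show ?thesis by linarith
    qed
    have "(- C - Q * w i) * N = - (C * N) - Q * (w i * N)" by (simp add: algebra_simps)
    also have "\<dots> \<le> (\<Sum>a\<in>X. f a * (\<Sum>b\<in>X. M a b * f b)) - Q * (\<Sum>x\<in>X. W x * (f x * f x))"
    proof -
      have "- (C * N) \<le> (\<Sum>a\<in>X. f a * (\<Sum>b\<in>X. M a b * f b))" using abs_le_D2[OF qb[of f]] by (simp add: N_def)
      moreover have "(\<Sum>x\<in>X. W x * (f x * f x)) \<le> w i * N"
        unfolding N_def sum_distrib_left
      proof (rule sum_mono)
        fix x assume x: "x \<in> X"
        show "W x * (f x * f x) \<le> w i * (f x * f x)"
        proof (cases "x \<in> T")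
          case True
          then obtain k where k: "i \<le> k" "k < n" "x = \<sigma> k" by (auto simp: T_def)
          then have "W x \<le> w i" using \<sigma>w wdec by auto
          then show ?thesis by (intro mult_right_mono) auto
        next
          case False then show ?thesis using f0 by simp
        qed
      qed
      then have "Q * (\<Sum>x\<in>X. W x * (f x * f x)) \<le> Q * (w i * N)" using Q by (rule mult_left_mono)
      ultimately show ?thesis by linarith
    qed
    also have "\<dots> = (\<Sum>x\<in>X. f x * schrodinger_apply X E W Q f x)"
      by (rule formH[symmetric])
    also have "\<dots> = (\<Sum>j<card X. lam Q j * (\<Sum>x\<in>X. f x * psi Q j x)^2)" using ray1[of f Q] by simp
    also have "\<dots> \<le> (\<Sum>j<card X. lam Q i * (\<Sum>x\<in>X. f x * psi Q j x)^2)"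
    proof (rule sum_mono)
      fix j assume j: "j \<in> {..<card X}"
      show "lam Q j * (\<Sum>x\<in>X. f x * psi Q j x)^2 \<le> lam Q i * (\<Sum>x\<in>X. f x * psi Q j x)^2"
      proof (cases "i < j")
        case True then show ?thesis using cj j n_def by simp
      next
        case False then show ?thesis using sorted[of j i Q] i by (intro mult_right_mono) auto
      qed
    qed
    also have "\<dots> = lam Q i * N"
      unfolding N_def ray2[of f Q] by (simp add: sum_distrib_left)
    finally show ?thesis using Npos by simp
  qed
  have psi1: "\<bar>psi Q i b\<bar> \<le> 1" if b: "b \<in> X" for Q b
  proof -
    have "psi Q i b * psi Q i b \<le> (\<Sum>x\<in>X. psi Q i x * psi Q i x)"
      using fin b by (intro member_le_sum) auto
    also have "\<dots> = 1" using orthonormal[of i i Q] i by simp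
    finally show ?thesis using abs_square_le_1[of "psi Q i b"] by (simp add: power2_eq_square)
  qed
  define d where "d = \<bar>W v - w i\<bar>"
  have dpos: "d > 0" using Wv d_def by simp
  have bnd: "\<bar>psi Q i v\<bar> \<le> (2 * C / d) * inverse Q" if Q: "Q \<ge> 2 * C / d" for Q
  proof -
    have Qpos: "Q > 0" using Q Cpos dpos by (smt (verit) divide_pos_pos)
    have Qd: "Q * d \<ge> 2 * C" using Q dpos by (simp add: pos_divide_le_eq)
    define D where "D = (\<Sum>b\<in>X. M v b * psi Q i b)"
    have eq: "(lam Q i + Q * W v) * psi Q i v = D"
      using eigen[OF i v, of Q] unfolding schrodinger_apply_def D_def M_def by (simp add: algebra_simps)
    have Db: "\<bar>D\<bar> \<le> C" using row_bound[OF fin v, of "psi Q i" M] psi1 C_def D_def by force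
    have lb: "\<bar>lam Q i + Q * W v\<bar> \<ge> Q * d - C"
    proof (cases "W v \<ge> w i")
      case True
      then have "Q * d = Q * W v - Q * w i" by (simp add: d_def algebra_simps)
      then show ?thesis using lower[of Q] Qpos by linarith
    next
      case False
      then have "Q * d = Q * w i - Q * W v" by (simp add: d_def algebra_simps)
      then show ?thesis using upper[of Q] Qpos by linarith
    qed
    have "\<bar>psi Q i v\<bar> * (Q * d / 2) \<le> \<bar>psi Q i v\<bar> * \<bar>lam Q i + Q * W v\<bar>"
      using lb Qd by (intro mult_left_mono) auto
    also have "\<dots> = \<bar>D\<bar>" using eq by (metis abs_mult mult.commute)
    also have "\<dots> \<le> C" by (rule Db)
    finally have "\<bar>psi Q i v\<bar> \<le> C / (Q * d / 2)"
      using Qpos dpos by (simp add: pos_le_divide_eq)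
    also have "\<dots> = (2 * C / d) * inverse Q" using Qpos dpos by (simp add: field_simps)
    finally show ?thesis .
  qed
  show "((\<lambda>Q. psi Q i v) \<longlongrightarrow> 0) at_top"
  proof (rule Lim_null_comparison)
    show "\<forall>\<^sub>F Q in at_top. norm (psi Q i v) \<le> (2 * C / d) * inverse Q"
      using bnd by (auto simp: eventually_at_top_linorder)
    show "((\<lambda>Q. (2 * C / d) * inverse Q) \<longlongrightarrow> 0) at_top"
      by (rule tendsto_mult_right_zero[OF tendsto_inverse_0_at_top[OF filterlim_ident]])
  qed
qed


end
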